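(* Consider the one-hop wireless network model described in the context, where the channel powers $\gamma_{i,j}$ are i.i.d. with a distribution of NHT (super-exponential) type, i.e., $\mathbb{E}\{e^{s\gamma_{1,1}}\}<\infty$ for some $s>0$. Then the throughput of any one-hop scheme is upper bounded by $\mathrm{O}(\log n)$: there is a constant $C>0$ such that, with high probability, $T(\mathbb{S})\le C\log n$ for every choice of the active set $\mathbb{S}\subset\{S_1,\dots,S_n\}$.
   Context: Network model: $n$ sources $S_1,\dots,S_n$ and $n$ destinations $D_1,\dots,D_n$; $S_i$ wishes to communicate with $D_i$ in one hop. The channel power from $S_i$ to $D_j$ is $\gamma_{i,j}\ge0$; all $\gamma_{i,j}$ are i.i.d. with mean $\mu>0$. A subset $\mathbb{S}$ of sources is active, each with power $1$ (the others silent); $SINR_i=\frac{\gamma_{i,i}}{N_0+\sum_{S_k\in\mathbb{S},k\ne i}\gamma_{k,i}}$ for $S_i\in\mathbb{S}$ (and $0$ otherwise), with noise variance $N_0\ge0$; $D_i$ succeeds if $SINR_i>\beta$ for a fixed constant $\beta>0$. The throughput $T(\mathbb{S})$ is the number of successful destinations. Logarithms are natural. "With high probability" means with probability tending to $1$ as $n\to\infty$. *)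

theory Defs
  imports "HOL-Probability.Probability"
begin

text \<open>Sources/destinations are indexed by 0..n-1. A gain matrix g maps (k,i) to
  the channel power from source k to destination i. S is the set of active sources.\<close>

definition sinr :: "real \<Rightarrow> (nat \<Rightarrow> nat \<Rightarrow> real) \<Rightarrow> nat set \<Rightarrow> nat \<Rightarrow> ereal" where
  "sinr N0 g S i =
     (if i \<in> S then
        (let d = N0 + (\<Sum>k\<in>S - {i}. g k i) in
          if d = 0 then (if g i i > 0 then \<infinity> else 0) else ereal (g i i / d))
      else 0)"

definition throughput :: "real \<Rightarrow> real \<Rightarrow> (nat \<Rightarrow> nat \<Rightarrow> real) \<Rightarrow> nat set \<Rightarrow> nat" where
  "throughput N0 \<beta> g S = card {i \<in> S. sinr N0 g S i > ereal \<beta>}"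

end

theory Submission imports Defs "HOL-Real_Asymp.Real_Asymp" begin


lemma sum_pairs:
  fixes x :: "nat \<Rightarrow> nat \<Rightarrow> real"
  assumes "finite T"
  shows "(\<Sum>p\<in>T\<times>T. if fst p = snd p then s * x (fst p) (snd p) else -(s*\<beta>) * x (fst p) (snd p))
       = s*(\<Sum>i\<in>T. x i i) - s*\<beta>*(\<Sum>i\<in>T. \<Sum>k\<in>T-{i}. x k i)"
proof -
  have "(\<Sum>p\<in>T\<times>T. if fst p = snd p then s * x (fst p) (snd p) else -(s*\<beta>) * x (fst p) (snd p))
     = (\<Sum>k\<in>T. \<Sum>i\<in>T. if k = i then s * x k i else -(s*\<beta>) * x k i)"
    unfolding sum.cartesian_product by (intro sum.cong) auto
  also have "\<dots> = (\<Sum>i\<in>T. \<Sum>k\<in>T. if k = i then s * x k i else -(s*\<beta>) * x k i)"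
    by (rule sum.swap)
  also have "\<dots> = (\<Sum>i\<in>T. s * x i i - s*\<beta>*(\<Sum>k\<in>T-{i}. x k i))"
  proof (rule sum.cong[OF refl])
    fix i assume i: "i \<in> T"
    have "(\<Sum>k\<in>T. if k = i then s * x k i else -(s*\<beta>) * x k i)
       = (if i = i then s * x i i else -(s*\<beta>) * x i i) + (\<Sum>k\<in>T-{i}. if k = i then s * x k i else -(s*\<beta>) * x k i)"
      using i assms by (simp add: sum.remove)
    also have "(\<Sum>k\<in>T-{i}. if k = i then s * x k i else -(s*\<beta>) * x k i) = (\<Sum>k\<in>T-{i}. -(s*\<beta>) * x k i)"
      by (rule sum.cong) auto
    finally show "(\<Sum>k\<in>T. if k = i then s * x k i else -(s*\<beta>) * x k i) = s * x i i - s*\<beta>*(\<Sum>k\<in>T-{i}. x k i)"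
      by (simp add: sum_distrib_left sum_negf)
  qed
  also have "\<dots> = s*(\<Sum>i\<in>T. x i i) - s*\<beta>*(\<Sum>i\<in>T. \<Sum>k\<in>T-{i}. x k i)"
    by (simp add: sum_subtractf sum_distrib_left)
  finally show ?thesis .
qed

lemma succ_bound:
  assumes "i \<in> S" "N0 \<ge> 0" "\<beta> > 0" "\<And>k. k\<in>S \<Longrightarrow> g k i \<ge> 0" "sinr N0 g S i > ereal \<beta>"
  shows "\<beta> * (\<Sum>k\<in>S-{i}. g k i) \<le> g i i"
proof -
  define d where "d = N0 + (\<Sum>k\<in>S-{i}. g k i)"
  have s0: "(\<Sum>k\<in>S-{i}. g k i) \<ge> 0" using assms(4) by (intro sum_nonneg) auto
  have d0: "d \<ge> 0" using s0 assms(2) by (simp add: d_def)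
  show ?thesis
  proof (cases "d = 0")
    case True
    then have "(\<Sum>k\<in>S-{i}. g k i) = 0" using s0 assms(2) by (simp add: d_def)
    moreover have "g i i \<ge> 0" using assms(1,4) by auto
    ultimately show ?thesis by simp
  next
    case False
    then have dp: "d > 0" using d0 by simp
    have "ereal \<beta> < ereal (g i i / d)" using assms(1,5) False unfolding sinr_def d_def[symmetric] Let_def
      by simp
    then have "\<beta> < g i i / d" by simp
    then have "\<beta> * d < g i i" using dp by (simp add: field_simps)
    moreover have "\<beta> * (\<Sum>k\<in>S-{i}. g k i) \<le> \<beta> * d" using assms(2,3) by (simp add: d_def)
    ultimately show ?thesis by simp
  qed
qed

lemma throughput_cong:
  assumes "\<And>k i. k\<in>S \<Longrightarrow> i\<in>S \<Longrightarrow> g k i = g' k i"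
  shows "throughput N0 \<beta> g S = throughput N0 \<beta> g' S"
proof -
  have "\<And>i. i \<in> S \<Longrightarrow> sinr N0 g S i = sinr N0 g' S i"
    unfolding sinr_def Let_def using assms by (auto intro!: sum.cong)
  then show ?thesis unfolding throughput_def by (metis (no_types, lifting) Collect_cong)
qed

lemma throughput_sum:
  assumes "finite S"
  shows "real (throughput N0 \<beta> g S) = (\<Sum>i\<in>S. if sinr N0 g S i > ereal \<beta> then 1 else 0)"
  unfolding throughput_def using assms by (simp add: sum.If_cases Int_def)



lemma (in prob_space) chernoff_T:
  fixes X :: "nat \<Rightarrow> nat \<Rightarrow> 'a \<Rightarrow> real" and D :: "real measure"
  assumes fin: "finite T" and s: "s \<ge> 0"
    and meas: "\<And>k i. k\<in>T \<Longrightarrow> i\<in>T \<Longrightarrow> X k i \<in> borel_measurable M"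
    and indep: "indep_vars (\<lambda>_. borel) (\<lambda>(k,i). X k i) (T\<times>T)"
    and dis: "\<And>k i. k\<in>T \<Longrightarrow> i\<in>T \<Longrightarrow> distr M borel (X k i) = D"
    and intA: "integrable D (\<lambda>x. exp (s*x))" and intB: "integrable D (\<lambda>x. exp (-(s*\<beta>)*x))"
  shows "prob {\<omega>\<in>space M. \<beta>*(\<Sum>i\<in>T. \<Sum>k\<in>T-{i}. X k i \<omega>) \<le> (\<Sum>i\<in>T. X i i \<omega>)}
     \<le> (\<integral>x. exp (s*x) \<partial>D)^card T * (\<integral>x. exp (-(s*\<beta>)*x) \<partial>D)^(card T * card T - card T)"
proof -
  define f where "f p x = (if fst p = snd p then exp (s*x) else exp (-(s*\<beta>)*x))" for p :: "nat \<times> nat" and x :: real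
  define A where "A = {\<omega>\<in>space M. \<beta>*(\<Sum>i\<in>T. \<Sum>k\<in>T-{i}. X k i \<omega>) \<le> (\<Sum>i\<in>T. X i i \<omega>)}"
  define Y where "Y p \<omega> = f p (X (fst p) (snd p) \<omega>)" for p \<omega>
  have fm: "f p \<in> borel_measurable borel" for p
    unfolding f_def by (cases "fst p = snd p") simp_all
  have Ym: "Y p \<in> borel_measurable M" if "p \<in> T\<times>T" for p
    unfolding Y_def using meas[of "fst p" "snd p"] that fm[of p] by (auto intro: measurable_compose)
  have indY: "indep_vars (\<lambda>_. borel) Y (T\<times>T)"
  proof -
    have "indep_vars (\<lambda>_. borel) (\<lambda>p x. f p ((\<lambda>(k,i). X k i) p x)) (T\<times>T)"
      by (rule indep_vars_compose2[OF indep]) (rule fm)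
    then show ?thesis
      by (rule indep_vars_cong[THEN iffD1, rotated 3]) (auto simp: Y_def)
  qed
  have intY: "integrable M (Y p)" if "p \<in> T\<times>T" for p
  proof -
    have d: "distr M borel (X (fst p) (snd p)) = D" using that dis by auto
    have "integrable D (f p)" unfolding f_def using intA intB by (cases "fst p = snd p") simp_all
    then have "integrable (distr M borel (X (fst p) (snd p))) (f p)" by (simp add: d)
    then show ?thesis unfolding Y_def
      using integrable_distr_eq[OF meas[of "fst p" "snd p"] fm[of p]] that by auto
  qed
  have EY: "(\<integral>\<omega>. Y p \<omega> \<partial>M) = (if fst p = snd p then (\<integral>x. exp (s*x) \<partial>D) else (\<integral>x. exp (-(s*\<beta>)*x) \<partial>D))"
    if "p \<in> T\<times>T" for p
  proof -
    have d: "distr M borel (X (fst p) (snd p)) = D" using that dis by auto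
    have "(\<integral>\<omega>. Y p \<omega> \<partial>M) = (\<integral>x. f p x \<partial>distr M borel (X (fst p) (snd p)))"
      unfolding Y_def using integral_distr[OF meas[of "fst p" "snd p"] fm[of p]] that by auto
    also have "\<dots> = (\<integral>x. f p x \<partial>D)" by (simp add: d)
    finally show ?thesis unfolding f_def by (cases "fst p = snd p") simp_all
  qed
  have Am: "A \<in> sets M"
  proof -
    have "(\<lambda>\<omega>. \<beta>*(\<Sum>i\<in>T. \<Sum>k\<in>T-{i}. X k i \<omega>)) \<in> borel_measurable M"
      using meas by (intro borel_measurable_times borel_measurable_const borel_measurable_sum) auto
    moreover have "(\<lambda>\<omega>. (\<Sum>i\<in>T. X i i \<omega>)) \<in> borel_measurable M"
      using meas by (intro borel_measurable_sum) auto
    ultimately show ?thesis unfolding A_def by measurable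
  qed
  have prodY: "(\<Prod>p\<in>T\<times>T. Y p \<omega>) = exp (s*(\<Sum>i\<in>T. X i i \<omega>) - s*\<beta>*(\<Sum>i\<in>T. \<Sum>k\<in>T-{i}. X k i \<omega>))" for \<omega>
  proof -
    have "(\<Prod>p\<in>T\<times>T. Y p \<omega>) = (\<Prod>p\<in>T\<times>T. exp (if fst p = snd p then s * X (fst p) (snd p) \<omega> else -(s*\<beta>) * X (fst p) (snd p) \<omega>))"
      unfolding Y_def f_def by (intro prod.cong) auto
    also have "\<dots> = exp (\<Sum>p\<in>T\<times>T. if fst p = snd p then s * X (fst p) (snd p) \<omega> else -(s*\<beta>) * X (fst p) (snd p) \<omega>)"
      by (simp add: exp_sum fin)
    also have "\<dots> = exp (s*(\<Sum>i\<in>T. X i i \<omega>) - s*\<beta>*(\<Sum>i\<in>T. \<Sum>k\<in>T-{i}. X k i \<omega>))"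
      using sum_pairs[OF fin, of s "\<lambda>k i. X k i \<omega>" \<beta>] by simp
    finally show ?thesis .
  qed
  have "prob A = (\<integral>\<omega>. indicator A \<omega> \<partial>M)" using Am by simp
  also have "\<dots> \<le> (\<integral>\<omega>. (\<Prod>p\<in>T\<times>T. Y p \<omega>) \<partial>M)"
  proof (rule integral_mono)
    show "integrable M (indicator A :: 'a \<Rightarrow> real)" using Am by (intro integrable_real_indicator) (auto simp: emeasure_eq_measure)
    show "integrable M (\<lambda>\<omega>. \<Prod>p\<in>T\<times>T. Y p \<omega>)"
      using indep_vars_integrable[OF _ indY intY] fin by simp
    fix \<omega> assume "\<omega> \<in> space M"
    show "indicator A \<omega> \<le> (\<Prod>p\<in>T\<times>T. Y p \<omega>)"
    proof (cases "\<omega> \<in> A")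
      case True
      then have "\<beta>*(\<Sum>i\<in>T. \<Sum>k\<in>T-{i}. X k i \<omega>) \<le> (\<Sum>i\<in>T. X i i \<omega>)" unfolding A_def by auto
      then have "s*(\<beta>*(\<Sum>i\<in>T. \<Sum>k\<in>T-{i}. X k i \<omega>)) \<le> s*(\<Sum>i\<in>T. X i i \<omega>)"
        using s by (rule mult_left_mono)
      then have "0 \<le> s*(\<Sum>i\<in>T. X i i \<omega>) - s*\<beta>*(\<Sum>i\<in>T. \<Sum>k\<in>T-{i}. X k i \<omega>)" by simp
      then show ?thesis using True unfolding prodY by simp
    next
      case False
      then show ?thesis unfolding prodY by simp
    qed
  qed
  also have "\<dots> = (\<Prod>p\<in>T\<times>T. \<integral>\<omega>. Y p \<omega> \<partial>M)"
    using indep_vars_lebesgue_integral[OF _ indY intY] fin by simp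
  also have "\<dots> = (\<Prod>p\<in>T\<times>T. if fst p = snd p then (\<integral>x. exp (s*x) \<partial>D) else (\<integral>x. exp (-(s*\<beta>)*x) \<partial>D))"
    using EY by (intro prod.cong) auto
  also have "\<dots> = (\<integral>x. exp (s*x) \<partial>D)^card (T\<times>T \<inter> {p. fst p = snd p})
       * (\<integral>x. exp (-(s*\<beta>)*x) \<partial>D)^card (T\<times>T \<inter> -{p. fst p = snd p})"
    using fin by (simp add: prod.If_cases)
  also have "card (T\<times>T \<inter> {p. fst p = snd p}) = card T"
  proof -
    have "T\<times>T \<inter> {p. fst p = snd p} = (\<lambda>i. (i,i)) ` T" by auto
    then show ?thesis by (simp add: card_image inj_on_def)
  qed
  also have "card (T\<times>T \<inter> -{p. fst p = snd p}) = card T * card T - card T"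
  proof -
    have "T\<times>T \<inter> -{p. fst p = snd p} = T\<times>T - (\<lambda>i. (i,i)) ` T" by auto
    moreover have "card ((\<lambda>i. (i,i)) ` T) = card T" by (simp add: card_image inj_on_def)
    ultimately show ?thesis using fin by (simp add: card_Diff_subset card_cartesian_product image_subset_iff)
  qed
  finally show ?thesis unfolding A_def .
qed



lemma sinr_meas:
  assumes [measurable]: "\<And>k i. Z k i \<in> borel_measurable M"
  shows "(\<lambda>\<omega>. sinr N0 (\<lambda>k i. Z k i \<omega>) S i) \<in> borel_measurable M"
  unfolding sinr_def Let_def by measurable

lemma good_meas:
  assumes [measurable]: "\<And>k i. Z k i \<in> borel_measurable M" and fin: "finite S"
  shows "{\<omega>\<in>space M. real (throughput N0 \<beta> (\<lambda>k i. Z k i \<omega>) S) \<le> c} \<in> sets M"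
proof -
  note sm[measurable] = sinr_meas[OF assms(1)]
  have "(\<lambda>\<omega>. \<Sum>i\<in>S. if sinr N0 (\<lambda>k i. Z k i \<omega>) S i > ereal \<beta> then 1 else (0::real)) \<in> borel_measurable M"
    by measurable
  then show ?thesis by (simp add: throughput_sum[OF fin])
qed



lemma qpow_bound:
  fixes q :: real and n :: nat
  assumes q: "0 < q" "q < 1" and n: "n \<ge> 1"
  defines "r \<equiv> - ln q"
  shows "q ^ nat \<lfloor>(3/r) * ln (real n)\<rfloor> \<le> exp r / real n ^ 3"
proof -
  have r: "r > 0" using q by (simp add: r_def)
  define m where "m = nat \<lfloor>(3/r) * ln (real n)\<rfloor>"
  have lnn: "ln (real n) \<ge> 0" using n by simp
  have c0: "(3/r) * ln (real n) \<ge> 0" using r lnn by simp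
  have m: "real m \<ge> (3/r) * ln (real n) - 1" unfolding m_def using c0
    by linarith
  have "q ^ m = exp (real m * ln q)" using q by (simp add: exp_of_nat_mult)
  also have "\<dots> = exp (- (real m * r))" by (simp add: r_def)
  also have "\<dots> \<le> exp (- (((3/r) * ln (real n) - 1) * r))"
    using m r by (intro exp_le_cancel_iff[THEN iffD2]) (simp add: mult_right_mono)
  also have "- (((3/r) * ln (real n) - 1) * r) = r - 3 * ln (real n)" using r by (simp add: field_simps)
  also have "exp (r - 3 * ln (real n)) = exp r / real n ^ 3"
  proof -
    have "exp (3*ln(real n)) = (exp (ln (real n)))^3" by (metis exp_of_nat_mult of_nat_numeral)
    then show ?thesis using n by (simp add: exp_diff)
  qed
  finally show ?thesis unfolding m_def .
qed

lemma bad_bound: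
  fixes q Mg :: real and n t :: nat
  assumes q: "0 < q" "q < 1" and n: "n \<ge> 1" and Mg: "Mg \<ge> 1"
  defines "r \<equiv> - ln q"
  defines "t \<equiv> nat \<lfloor>(3/r) * ln (real n)\<rfloor> + 1"
  assumes small: "Mg * exp r / real n ^ 2 \<le> 1"
  shows "real (n choose t) * Mg ^ t * q ^ (t*t - t) \<le> Mg * exp r / real n ^ 2"
proof -
  have qb: "q ^ (t - 1) \<le> exp r / real n ^ 3" using qpow_bound[OF q n] by (simp add: t_def r_def)
  have "real (n choose t) \<le> real n ^ t" using binomial_le_pow[of t n] 
    by (metis binomial_eq_0 bot_nat_0.extremum linorder_not_le of_nat_le_iff of_nat_power)
  have tt: "t*t - t = t * (t - 1)" by (simp add: diff_mult_distrib2)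
  have "real (n choose t) * Mg ^ t * q ^ (t*(t - 1)) \<le> real n ^ t * Mg ^ t * q ^ (t*(t - 1))"
    using \<open>real (n choose t) \<le> real n ^ t\<close> Mg q by (intro mult_right_mono) auto
  also have "real n ^ t * Mg ^ t * q ^ (t * (t - 1)) = (real n * Mg * q ^ (t-1)) ^ t"
    by (simp add: power_mult_distrib power_mult[symmetric] mult.commute)
  also have "\<dots> \<le> (Mg * exp r / real n ^ 2) ^ t"
  proof (rule power_mono)
    have "real n * Mg * q ^ (t-1) \<le> real n * Mg * (exp r / real n ^ 3)"
      using qb Mg n by (intro mult_left_mono) auto
    also have "\<dots> = Mg * exp r / real n ^ 2" using n by (simp add: field_simps power3_eq_cube power2_eq_square)
    finally show "real n * Mg * q ^ (t-1) \<le> Mg * exp r / real n ^ 2" .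
    show "0 \<le> real n * Mg * q ^ (t-1)" using Mg q by simp
  qed
  also have "\<dots> \<le> Mg * exp r / real n ^ 2"
    using power_decreasing[of 1 t "Mg * exp r / real n ^ 2"] small Mg by (simp add: t_def)
  finally show ?thesis unfolding tt .
qed



theorem theorem2:
  fixes M :: "'a measure" and D :: "real measure"
    and \<gamma> :: "nat \<Rightarrow> nat \<Rightarrow> nat \<Rightarrow> 'a \<Rightarrow> real"
    and N0 \<beta> :: real
  assumes "prob_space M"
    and "\<And>n i j. i < n \<Longrightarrow> j < n \<Longrightarrow> \<gamma> n i j \<in> borel_measurable M"
    and "\<And>n. prob_space.indep_vars M (\<lambda>_. borel) (\<lambda>(i, j). \<gamma> n i j) ({..<n} \<times> {..<n})"
    and "\<And>n i j. i < n \<Longrightarrow> j < n \<Longrightarrow> distr M borel (\<gamma> n i j) = D"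
    and "AE x in D. 0 \<le> x"
    and "integrable D (\<lambda>x. x)" and "(\<integral>x. x \<partial>D) > 0"
    and "\<exists>s>0. integrable D (\<lambda>x. exp (s * x))"
    and "N0 \<ge> 0" and "\<beta> > 0"
  shows "\<exists>C>0. (\<lambda>n. measure M {\<omega> \<in> space M. \<forall>S \<subseteq> {..<n}.
            real (throughput N0 \<beta> (\<lambda>k i. \<gamma> n k i \<omega>) S) \<le> C * ln (real n)}) \<longlonglongrightarrow> 1"
proof -
  interpret prob_space M by (rule assms(1))
  obtain s where s: "s > 0" and intA: "integrable D (\<lambda>x. exp (s * x))" using assms(8) by blast
  have Dd: "D = distr M borel (\<gamma> 1 0 0)" using assms(4)[of 0 1 0] by simp
  have m100: "\<gamma> 1 0 0 \<in> borel_measurable M" using assms(2) by simp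
  interpret D: prob_space D unfolding Dd by (rule prob_space_distr[OF m100])
  have sD: "sets D = sets borel" unfolding Dd by simp
  have mD: "f \<in> borel_measurable D" if "f \<in> borel_measurable borel" for f :: "real \<Rightarrow> real"
    using that measurable_cong_sets[OF sD refl] by blast
  have intB: "integrable D (\<lambda>x. exp (-(s*\<beta>)*x))"
  proof (rule D.integrable_const_bound[where B=1])
    show "AE x in D. norm (exp (-(s*\<beta>)*x)) \<le> 1"
      using assms(5) by eventually_elim (use s assms(10) in simp)
    show "(\<lambda>x. exp (-(s*\<beta>)*x)) \<in> borel_measurable D" by (rule mD) simp
  qed
  define Mg where "Mg = (\<integral>x. exp (s*x) \<partial>D)"
  define \<phi> where "\<phi> = (\<integral>x. exp (-(s*\<beta>)*x) \<partial>D)"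
  have Mg0: "Mg \<ge> 0" unfolding Mg_def by simp
  have phi0: "\<phi> \<ge> 0" unfolding \<phi>_def by simp
  have phi1: "\<phi> < 1"
  proof (rule ccontr)
    assume "\<not> \<phi> < 1"
    have int1: "integrable D (\<lambda>x. 1 - exp (-(s*\<beta>)*x))" using intB by simp
    have ae1: "AE x in D. 0 \<le> 1 - exp (-(s*\<beta>)*x)"
      using assms(5) by eventually_elim (use s assms(10) in simp)
    have "(\<integral>x. 1 - exp (-(s*\<beta>)*x) \<partial>D) = 1 - \<phi>"
      using intB by (simp add: \<phi>_def D.prob_space)
    moreover have "(\<integral>x. 1 - exp (-(s*\<beta>)*x) \<partial>D) \<ge> 0" using ae1 by (rule integral_nonneg_AE)
    ultimately have "(\<integral>x. 1 - exp (-(s*\<beta>)*x) \<partial>D) = 0" using \<open>\<not> \<phi> < 1\<close> by simp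
    then have "AE x in D. 1 - exp (-(s*\<beta>)*x) = 0" using integral_nonneg_eq_0_iff_AE[OF int1 ae1] by simp
    then have "AE x in D. x = 0"
      by eventually_elim (use s assms(10) in simp)
    then have "(\<integral>x. x \<partial>D) = (\<integral>x. 0 \<partial>D)" by (rule integral_cong_AE[rotated 2]) (auto intro: mD)
    then show False using assms(7) by simp
  qed
  define q where "q = (1 + \<phi>)/2"
  have q: "0 < q" "q < 1" "\<phi> \<le> q" using phi0 phi1 by (auto simp: q_def)
  define r where "r = - ln q"
  have r: "r > 0" using q by (simp add: r_def)
  define C where "C = 3 / r"
  have C: "C > 0" using r by (simp add: C_def)
  define Mg' where "Mg' = max Mg 1"
  define K where "K = Mg' * exp r"
  define t0 where "t0 n = nat \<lfloor>C * ln (real n)\<rfloor> + 1" for n :: nat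
  define Z where "Z n k i \<omega> = (if k < n \<and> i < n then \<gamma> n k i \<omega> else 0)" for n k i \<omega>
  have Zm[measurable]: "Z n k i \<in> borel_measurable M" for n k i
    unfolding Z_def using assms(2)[of k n i] by (cases "k < n \<and> i < n") (simp_all del: de_Morgan_conj)
  define AT where "AT n T = {\<omega>\<in>space M. \<beta>*(\<Sum>i\<in>T. \<Sum>k\<in>T-{i}. Z n k i \<omega>) \<le> (\<Sum>i\<in>T. Z n i i \<omega>)}" for n T
  have ATm: "AT n T \<in> sets M" for n T unfolding AT_def by measurable
  define Bad where "Bad n = (\<Union>T\<in>{T. T \<subseteq> {..<n} \<and> card T = t0 n}. AT n T)" for n
  define Nn where "Nn n = {\<omega>\<in>space M. \<forall>k\<in>{..<n}. \<forall>i\<in>{..<n}. 0 \<le> Z n k i \<omega>}" for n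
  define G where "G n = {\<omega> \<in> space M. \<forall>S \<subseteq> {..<n}.
            real (throughput N0 \<beta> (\<lambda>k i. \<gamma> n k i \<omega>) S) \<le> C * ln (real n)}" for n

  have Gm: "G n \<in> sets M" for n
  proof -
    have "G n = (\<Inter>S\<in>Pow {..<n}. {\<omega>\<in>space M. real (throughput N0 \<beta> (\<lambda>k i. Z n k i \<omega>) S) \<le> C * ln (real n)})"
    proof -
      have "throughput N0 \<beta> (\<lambda>k i. \<gamma> n k i \<omega>) S = throughput N0 \<beta> (\<lambda>k i. Z n k i \<omega>) S"
        if "S \<subseteq> {..<n}" for S \<omega>
        using that by (intro throughput_cong) (auto simp: Z_def)
      then show ?thesis unfolding G_def by auto
    qed
    also have "\<dots> \<in> sets M"
      by (intro sets.finite_INT good_meas) (auto intro: finite_subset)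
    finally show ?thesis .
  qed
  have Nnm: "Nn n \<in> sets M" for n unfolding Nn_def by measurable
  have Nn1: "prob (Nn n) = 1" for n
  proof -
    have "AE \<omega> in M. 0 \<le> \<gamma> n k i \<omega>" if "k < n" "i < n" for k i
    proof -
      have "AE x in distr M borel (\<gamma> n k i). 0 \<le> x" unfolding assms(4)[OF that] by (rule assms(5))
      then show ?thesis using AE_distr_iff[OF assms(2)[OF that], of "\<lambda>x. 0 \<le> x"] by simp
    qed
    then have "AE \<omega> in M. \<forall>k\<in>{..<n}. \<forall>i\<in>{..<n}. 0 \<le> Z n k i \<omega>"
      by (intro AE_finite_allI) (auto simp: Z_def)
    then have "AE \<omega> in M. \<omega> \<in> Nn n" using AE_space by eventually_elim (auto simp: Nn_def)
    then show ?thesis using prob_eq_1[OF Nnm] by simp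
  qed
  have ATb: "prob (AT n T) \<le> Mg' ^ card T * q ^ (card T * card T - card T)" if T: "T \<subseteq> {..<n}" for n T
  proof -
    have fin: "finite T" using T finite_subset by blast
    have ind0: "indep_vars (\<lambda>_. borel) (\<lambda>(i, j). \<gamma> n i j) (T\<times>T)"
      by (rule indep_vars_subset[OF assms(3)[of n]]) (use T in auto)
    have ind: "indep_vars (\<lambda>_. borel) (\<lambda>(k, i). Z n k i) (T\<times>T)"
      by (rule indep_vars_cong[THEN iffD1, OF refl _ refl ind0]) (use T in \<open>auto simp: Z_def fun_eq_iff\<close>)
    have dis: "distr M borel (Z n k i) = D" if "k \<in> T" "i \<in> T" for k i
    proof -
      have "Z n k i = \<gamma> n k i" using that T by (auto simp: Z_def fun_eq_iff)
      then show ?thesis using assms(4)[of k n i] that T by auto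
    qed
    have "prob (AT n T) \<le> Mg ^ card T * \<phi> ^ (card T * card T - card T)"
      unfolding AT_def Mg_def \<phi>_def
      by (rule chernoff_T[OF fin _ Zm ind dis intA intB]) (use s in auto)
    also have "\<dots> \<le> Mg' ^ card T * q ^ (card T * card T - card T)"
      using Mg0 phi0 q by (intro mult_mono power_mono) (auto simp: Mg'_def)
    finally show ?thesis .
  qed
  have Badm: "Bad n \<in> sets M" for n unfolding Bad_def using ATm by auto
  have bad: "prob (Bad n) \<le> K / real n ^ 2" if n: "n \<ge> 1" and small: "K / real n ^ 2 \<le> 1" for n
  proof -
    define I where "I = {T. T \<subseteq> {..<n} \<and> card T = t0 n}"
    have finI: "finite I" unfolding I_def by (rule finite_subset[of _ "Pow {..<n}"]) auto
    have "prob (Bad n) \<le> (\<Sum>T\<in>I. prob (AT n T))"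
      unfolding Bad_def I_def[symmetric] using finI ATm by (intro finite_measure_subadditive_finite) auto
    also have "\<dots> \<le> (\<Sum>T\<in>I. Mg' ^ t0 n * q ^ (t0 n * t0 n - t0 n))"
      using ATb by (intro sum_mono) (metis (mono_tags, lifting) I_def mem_Collect_eq)
    also have "\<dots> = real (n choose t0 n) * Mg' ^ t0 n * q ^ (t0 n * t0 n - t0 n)"
      unfolding I_def using n_subsets[of "{..<n}" "t0 n"] by simp
    also have "\<dots> \<le> K / real n ^ 2"
      using bad_bound[OF q(1,2) n, of Mg'] small unfolding K_def t0_def C_def r_def Mg'_def
      by simp
    finally show ?thesis .
  qed
  have incl: "Nn n - Bad n \<subseteq> G n" if n: "n \<ge> 1" for n
  proof
    fix \<omega> assume w: "\<omega> \<in> Nn n - Bad n"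
    then have ws: "\<omega> \<in> space M" and nn: "\<And>k i. k < n \<Longrightarrow> i < n \<Longrightarrow> 0 \<le> Z n k i \<omega>"
      by (auto simp: Nn_def)
    have "real (throughput N0 \<beta> (\<lambda>k i. \<gamma> n k i \<omega>) S) \<le> C * ln (real n)" if S: "S \<subseteq> {..<n}" for S
    proof (rule ccontr)
      assume "\<not> ?thesis"
      moreover have "throughput N0 \<beta> (\<lambda>k i. \<gamma> n k i \<omega>) S = throughput N0 \<beta> (\<lambda>k i. Z n k i \<omega>) S"
        using S by (intro throughput_cong) (auto simp: Z_def)
      ultimately have gt: "real (throughput N0 \<beta> (\<lambda>k i. Z n k i \<omega>) S) > C * ln (real n)"
        by simp
      define W where "W = {i \<in> S. sinr N0 (\<lambda>k i. Z n k i \<omega>) S i > ereal \<beta>}"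
      have cW: "card W = throughput N0 \<beta> (\<lambda>k i. Z n k i \<omega>) S" unfolding W_def throughput_def ..
      have c0: "C * ln (real n) \<ge> 0" using C n by simp
      have "t0 n \<le> card W" using gt c0 unfolding cW t0_def by linarith
      then obtain T where T: "T \<subseteq> W" "card T = t0 n" "finite T" by (rule obtain_subset_with_card_n)
      have TS: "T \<subseteq> S" using T W_def by auto
      have finS: "finite S" using S finite_subset by blast
      have "\<beta>*(\<Sum>i\<in>T. \<Sum>k\<in>T-{i}. Z n k i \<omega>) = (\<Sum>i\<in>T. \<beta>*(\<Sum>k\<in>T-{i}. Z n k i \<omega>))"
        by (simp add: sum_distrib_left)
      also have "\<dots> \<le> (\<Sum>i\<in>T. Z n i i \<omega>)"
      proof (rule sum_mono)
        fix i assume i: "i \<in> T"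
        have iS: "i \<in> S" using i TS by auto
        have "(\<Sum>k\<in>T-{i}. Z n k i \<omega>) \<le> (\<Sum>k\<in>S-{i}. Z n k i \<omega>)"
          using TS S iS finS by (intro sum_mono2) (auto intro!: nn)
        then have "\<beta>*(\<Sum>k\<in>T-{i}. Z n k i \<omega>) \<le> \<beta>*(\<Sum>k\<in>S-{i}. Z n k i \<omega>)"
          using assms(10) by simp
        also have "\<dots> \<le> Z n i i \<omega>"
          using i T(1) iS S by (intro succ_bound[OF iS assms(9,10)]) (auto intro!: nn simp: W_def)
        finally show "\<beta>*(\<Sum>k\<in>T-{i}. Z n k i \<omega>) \<le> Z n i i \<omega>" .
      qed
      finally have "\<omega> \<in> AT n T" using ws unfolding AT_def by simp
      then have "\<omega> \<in> Bad n" using TS S T(2) unfolding Bad_def by auto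
      then show False using w by simp
    qed
    then show "\<omega> \<in> G n" using ws unfolding G_def by auto
  qed
  have ev: "eventually (\<lambda>n. 1 - K / real n ^ 2 \<le> prob (G n)) sequentially"
    using eventually_ge_at_top[of "max 1 (nat \<lceil>K\<rceil>)"]
  proof eventually_elim
    case (elim n)
    have n: "n \<ge> 1" using elim by simp
    have K1: "K \<ge> 1" unfolding K_def Mg'_def using r
      by (metis max.cobounded2 mult_mono' one_le_exp_iff order_less_imp_le zero_le_one mult_1_left)
    have "K \<le> real n" using elim by linarith
    also have "real n \<le> real n ^ 2" using n by (simp add: power2_eq_square)
    finally have small: "K / real n ^ 2 \<le> 1" using n by simp
    have "1 - K / real n ^ 2 \<le> prob (Nn n) - prob (Bad n)" using bad[OF n small] Nn1 by simp
    also have "\<dots> \<le> prob (Nn n) - prob (Nn n \<inter> Bad n)"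
      using Badm by (intro diff_left_mono finite_measure_mono) auto
    also have "\<dots> = prob (Nn n - Bad n)" using finite_measure_Diff'[OF Nnm Badm] by simp
    also have "\<dots> \<le> prob (G n)" using incl[OF n] Gm by (rule finite_measure_mono)
    finally show ?case .
  qed
  have "(\<lambda>n. prob (G n)) \<longlonglongrightarrow> 1"
  proof (rule tendsto_sandwich[OF ev])
    show "eventually (\<lambda>n. prob (G n) \<le> 1) sequentially" by simp
    show "(\<lambda>n. 1 - K / real n ^ 2) \<longlonglongrightarrow> 1" by real_asymp
  qed simp
  then show ?thesis using C unfolding G_def by blast
qed

end
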